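(* Let $G$ be a nonabelian group, let $\psi\in\operatorname{End}(G)$ satisfy $\psi([G,G])\le Z(G)$, and let $\alpha\in\mathscr{E}$. Writing $\psi_\alpha=\psi\circ\alpha$, define a binary operation on $G$ by $g\circ_\alpha h=g\,\psi_\alpha(g)\,h\,\psi_\alpha(g)^{-1}$. Then $(G,\circ_\alpha)$ is a group.
   Context: $Z(G)$ is the center and $[G,G]$ the commutator subgroup of $G$. $\mathscr{E}$ denotes the set of formal expressions $\alpha=n_1\phi_1+\cdots+n_t\phi_t$ with $t\ge0$, $n_i\in\mathbb Z$, $\phi_i\in\operatorname{End}(G)$ (the free group on $\operatorname{End}(G)$, written additively), acting on $G$ by $\alpha(g)=\phi_1(g^{n_1})\phi_2(g^{n_2})\cdots\phi_t(g^{n_t})$. *)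

theory Defs
  imports "HOL-Algebra.Algebra"
begin

definition group_center :: "('a, 'b) monoid_scheme \<Rightarrow> 'a set" where
  "group_center G = {z \<in> carrier G. \<forall>g \<in> carrier G. z \<otimes>\<^bsub>G\<^esub> g = g \<otimes>\<^bsub>G\<^esub> z}"

abbreviation commutator_subgroup :: "('a, 'b) monoid_scheme \<Rightarrow> 'a set" where
  "commutator_subgroup G \<equiv> derived G (carrier G)"

text \<open>A formal expression n_1 phi_1 + ... + n_t phi_t is represented by the list
  [(n_1, phi_1), ..., (n_t, phi_t)]; it is an element of the set E when every phi_i
  is an endomorphism of G.\<close>
definition formal_exprs :: "('a, 'b) monoid_scheme \<Rightarrow> (int \<times> ('a \<Rightarrow> 'a)) list set" where
  "formal_exprs G = {xs. \<forall>(n, \<phi>) \<in> set xs. \<phi> \<in> hom G G}"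

fun expr_apply :: "('a, 'b) monoid_scheme \<Rightarrow> (int \<times> ('a \<Rightarrow> 'a)) list \<Rightarrow> 'a \<Rightarrow> 'a" where
  "expr_apply G [] g = \<one>\<^bsub>G\<^esub>"
| "expr_apply G ((n, \<phi>) # xs) g = \<phi> (g [^]\<^bsub>G\<^esub> n) \<otimes>\<^bsub>G\<^esub> expr_apply G xs g"

definition circ_op :: "('a, 'b) monoid_scheme \<Rightarrow> ('a \<Rightarrow> 'a) \<Rightarrow> (int \<times> ('a \<Rightarrow> 'a)) list \<Rightarrow> 'a \<Rightarrow> 'a \<Rightarrow> 'a" where
  "circ_op G \<psi> \<alpha> g h =
     g \<otimes>\<^bsub>G\<^esub> \<psi> (expr_apply G \<alpha> g) \<otimes>\<^bsub>G\<^esub> h \<otimes>\<^bsub>G\<^esub> inv\<^bsub>G\<^esub> (\<psi> (expr_apply G \<alpha> g))"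

end

theory Submission
  imports Defs
begin

lemma centerD:
  fixes G (structure)
  shows "z \<in> group_center G \<Longrightarrow> x \<in> carrier G \<Longrightarrow> z \<otimes> x = x \<otimes> z"
  unfolding group_center_def by blast

lemma centerD2:
  fixes G (structure)
  shows "z \<in> group_center G \<Longrightarrow> z \<in> carrier G"
  unfolding group_center_def by blast

lemma centerI:
  fixes G (structure)
  shows "z \<in> carrier G \<Longrightarrow> (\<And>x. x \<in> carrier G \<Longrightarrow> z \<otimes> x = x \<otimes> z) \<Longrightarrow> z \<in> group_center G"
  unfolding group_center_def by blast

lemma center_subgroup:
  fixes G (structure)
  assumes G: "group G"
  shows "subgroup (group_center G) G"
proof -
  interpret group G by (rule G)
  show ?thesis
  proof (rule subgroupI)
    show "group_center G \<subseteq> carrier G" by (rule subsetI, erule centerD2)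
    have "\<one> \<in> group_center G" by (rule centerI) auto
    then show "group_center G \<noteq> {}" by blast
  next
    fix a assume a: "a \<in> group_center G"
    then have ac: "a \<in> carrier G" by (rule centerD2)
    have "inv a \<otimes> g = g \<otimes> inv a" if g: "g \<in> carrier G" for g
    proof -
      have "inv a \<otimes> g = inv a \<otimes> (g \<otimes> a) \<otimes> inv a" using ac g by (simp add: m_assoc)
      also have "\<dots> = inv a \<otimes> (a \<otimes> g) \<otimes> inv a" using centerD[OF a g] by simp
      also have "\<dots> = g \<otimes> inv a" using ac g by (simp add: m_assoc[symmetric])
      finally show ?thesis .
    qed
    then show "inv a \<in> group_center G" using ac by (intro centerI) auto
  next
    fix a b assume a: "a \<in> group_center G" and b: "b \<in> group_center G"
    note ac = centerD2[OF a] and bc = centerD2[OF b]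
    have "a \<otimes> b \<otimes> g = g \<otimes> (a \<otimes> b)" if g: "g \<in> carrier G" for g
    proof -
      have "a \<otimes> b \<otimes> g = a \<otimes> (g \<otimes> b)" using centerD[OF b g] ac bc g by (simp add: m_assoc)
      also have "\<dots> = (a \<otimes> g) \<otimes> b" using g ac bc by (simp add: m_assoc)
      also have "\<dots> = g \<otimes> (a \<otimes> b)" using centerD[OF a g] g ac bc by (simp add: m_assoc)
      finally show ?thesis .
    qed
    then show "a \<otimes> b \<in> group_center G" using ac bc by (intro centerI) auto
  qed
qed

lemma center_normal:
  fixes G (structure)
  assumes G: "group G"
  shows "group_center G \<lhd> G"
proof -
  interpret group G by (rule G)
  show ?thesis
  proof (rule normalI[OF center_subgroup[OF G]], intro ballI)
    fix x assume x: "x \<in> carrier G"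
    show "group_center G #> x = x <# group_center G"
      unfolding r_coset_def l_coset_def using centerD[OF _ x] by auto
  qed
qed

lemma expr_closed:
  fixes G (structure)
  assumes G: "group G" and al: "\<alpha> \<in> formal_exprs G" and g: "g \<in> carrier G"
  shows "expr_apply G \<alpha> g \<in> carrier G"
  using al
proof (induction \<alpha>)
  case Nil
  then show ?case using G by (simp add: group.is_monoid monoid.one_closed)
next
  case (Cons a xs)
  obtain n \<phi> where a: "a = (n, \<phi>)" by fastforce
  have ph: "\<phi> \<in> hom G G" using Cons.prems a unfolding formal_exprs_def by auto
  have xs: "xs \<in> formal_exprs G" using Cons.prems unfolding formal_exprs_def by auto
  have "\<phi> (g [^] n) \<in> carrier G" using ph g G by (meson group.int_pow_closed hom_in_carrier)
  then show ?case using a Cons.IH[OF xs] G by (simp add: group.is_monoid monoid.m_closed)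
qed

lemma expr_one:
  fixes G (structure)
  assumes G: "group G" and al: "\<alpha> \<in> formal_exprs G"
  shows "expr_apply G \<alpha> \<one> = \<one>"
  using al
proof (induction \<alpha>)
  case Nil
  then show ?case by simp
next
  case (Cons a xs)
  obtain n \<phi> where a: "a = (n, \<phi>)" by fastforce
  have ph: "\<phi> \<in> hom G G" using Cons.prems a unfolding formal_exprs_def by auto
  have xs: "xs \<in> formal_exprs G" using Cons.prems unfolding formal_exprs_def by auto
  have "\<phi> \<one> = \<one>" using ph G by (simp add: group_hom.hom_one group_hom_axioms_def group_hom_def)
  then show ?case using a Cons.IH[OF xs] G by (simp add: group.int_pow_one group.is_monoid monoid.l_one)
qed

lemma expr_hom:
  fixes G (structure)
  assumes G: "group G" and Q: "group Q" and F: "F \<in> hom G Q"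
    and com: "\<And>x y. x \<in> carrier G \<Longrightarrow> y \<in> carrier G \<Longrightarrow> F x \<otimes>\<^bsub>Q\<^esub> F y = F y \<otimes>\<^bsub>Q\<^esub> F x"
    and al: "\<alpha> \<in> formal_exprs G" and g: "g \<in> carrier G" and h: "h \<in> carrier G"
  shows "F (expr_apply G \<alpha> (g \<otimes> h)) = F (expr_apply G \<alpha> g) \<otimes>\<^bsub>Q\<^esub> F (expr_apply G \<alpha> h)"
  using al
proof (induction \<alpha>)
  case Nil
  then show ?case using G Q F
    by (simp add: group_hom.hom_one group_hom_axioms_def group_hom_def group.is_monoid monoid.l_one monoid.one_closed)
next
  case (Cons a xs)
  interpret G: group G by (rule G)
  interpret Q: group Q by (rule Q)
  obtain n \<phi> where a: "a = (n, \<phi>)" by fastforce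
  have ph: "\<phi> \<in> hom G G" using Cons.prems a unfolding formal_exprs_def by auto
  have xs: "xs \<in> formal_exprs G" using Cons.prems unfolding formal_exprs_def by auto
  have Fph: "F \<circ> \<phi> \<in> hom G Q" using ph F by (rule hom_compose)
  have phc: "\<And>x. x \<in> carrier G \<Longrightarrow> \<phi> x \<in> carrier G" using ph by (simp add: hom_in_carrier)
  have Fc: "\<And>x. x \<in> carrier G \<Longrightarrow> F x \<in> carrier Q" using F by (simp add: hom_in_carrier)
  have Fm: "\<And>x y. x \<in> carrier G \<Longrightarrow> y \<in> carrier G \<Longrightarrow> F (x \<otimes> y) = F x \<otimes>\<^bsub>Q\<^esub> F y"
    using F by (simp add: hom_mult)
  have Fpow: "\<And>x. x \<in> carrier G \<Longrightarrow> F (\<phi> (x [^] n)) = (F (\<phi> x)) [^]\<^bsub>Q\<^esub> n"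
    using hom_int_pow[OF Fph _ G Q] by simp
  have gh: "g \<otimes> h \<in> carrier G" using g h by simp
  have "F (\<phi> ((g \<otimes> h) [^] n)) = (F (\<phi> g) \<otimes>\<^bsub>Q\<^esub> F (\<phi> h)) [^]\<^bsub>Q\<^esub> n"
    using Fpow[OF gh] hom_mult[OF ph g h] Fm[OF phc[OF g] phc[OF h]] by simp
  also have "\<dots> = F (\<phi> g) [^]\<^bsub>Q\<^esub> n \<otimes>\<^bsub>Q\<^esub> F (\<phi> h) [^]\<^bsub>Q\<^esub> n"
    by (rule Q.int_pow_mult_distrib) (auto intro: com phc g h Fc)
  also have "\<dots> = F (\<phi> (g [^] n)) \<otimes>\<^bsub>Q\<^esub> F (\<phi> (h [^] n))"
    using Fpow g h by simp
  finally have e1: "F (\<phi> ((g \<otimes> h) [^] n)) = F (\<phi> (g [^] n)) \<otimes>\<^bsub>Q\<^esub> F (\<phi> (h [^] n))" .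
  define A where "A = \<phi> (g [^] n)"
  define B where "B = \<phi> (h [^] n)"
  define C where "C = expr_apply G xs g"
  define D where "D = expr_apply G xs h"
  have A: "A \<in> carrier G" and B: "B \<in> carrier G" unfolding A_def B_def using phc g h by auto
  have C: "C \<in> carrier G" and D: "D \<in> carrier G" unfolding C_def D_def using expr_closed[OF G xs] g h by auto
  have "F (expr_apply G (a # xs) (g \<otimes> h)) = F (\<phi> ((g \<otimes> h) [^] n)) \<otimes>\<^bsub>Q\<^esub> F (expr_apply G xs (g \<otimes> h))"
    using a Fm phc expr_closed[OF G xs gh] gh by simp
  also have "\<dots> = (F A \<otimes>\<^bsub>Q\<^esub> F B) \<otimes>\<^bsub>Q\<^esub> (F C \<otimes>\<^bsub>Q\<^esub> F D)"
    using e1 Cons.IH[OF xs] unfolding A_def B_def C_def D_def by simp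
  also have "\<dots> = F A \<otimes>\<^bsub>Q\<^esub> (F B \<otimes>\<^bsub>Q\<^esub> F C) \<otimes>\<^bsub>Q\<^esub> F D"
    using A B C D Fc by (simp add: Q.m_assoc)
  also have "\<dots> = F A \<otimes>\<^bsub>Q\<^esub> (F C \<otimes>\<^bsub>Q\<^esub> F B) \<otimes>\<^bsub>Q\<^esub> F D"
    using com[OF B C] by simp
  also have "\<dots> = (F A \<otimes>\<^bsub>Q\<^esub> F C) \<otimes>\<^bsub>Q\<^esub> (F B \<otimes>\<^bsub>Q\<^esub> F D)"
    using A B C D Fc by (simp add: Q.m_assoc)
  also have "\<dots> = F (expr_apply G (a # xs) g) \<otimes>\<^bsub>Q\<^esub> F (expr_apply G (a # xs) h)"
    using a Fm A B C D unfolding A_def B_def C_def D_def by simp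
  finally show ?case .
qed

lemma (in group) cancel1: "a \<in> carrier G \<Longrightarrow> x \<in> carrier G \<Longrightarrow> inv a \<otimes> (a \<otimes> x) = x"
  by (simp add: m_assoc[symmetric])

lemma (in group) cancel2: "a \<in> carrier G \<Longrightarrow> x \<in> carrier G \<Longrightarrow> a \<otimes> (inv a \<otimes> x) = x"
  by (simp add: m_assoc[symmetric])

lemma cos_eqI:
  fixes G (structure)
  assumes G: "group G" and H: "subgroup H G" and a: "a \<in> carrier G" and b: "b \<in> carrier G"
    and ab: "a \<otimes> inv b \<in> H"
  shows "H #> a = H #> b"
proof -
  have "a \<in> H #> b" using subgroup.rcos_module_rev[OF H G b a ab] .
  then show ?thesis using group.repr_independence[OF G _ b H] by simp
qed

lemma cos_eqD:
  fixes G (structure)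
  assumes G: "group G" and H: "subgroup H G" and a: "a \<in> carrier G" and b: "b \<in> carrier G"
    and ab: "H #> a = H #> b"
  shows "a \<otimes> inv b \<in> H"
proof -
  have "a \<in> H #> b" using group.rcos_self[OF G a H] ab by simp
  then show ?thesis using subgroup.rcos_module_imp[OF H G b] by simp
qed

lemma conj_central:
  fixes G (structure)
  assumes G: "group G" and z: "z \<in> group_center G" and P: "P \<in> carrier G" and k: "k \<in> carrier G"
  shows "z \<otimes> P \<otimes> k \<otimes> inv (z \<otimes> P) = P \<otimes> k \<otimes> inv P"
proof -
  interpret group G by (rule G)
  have zc: "z \<in> carrier G" by (rule centerD2[OF z])
  have X: "P \<otimes> k \<otimes> inv P \<in> carrier G" using P k by simp
  have "z \<otimes> P \<otimes> k \<otimes> inv (z \<otimes> P) = z \<otimes> (P \<otimes> k \<otimes> inv P) \<otimes> inv z"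
    using zc P k by (simp add: inv_mult_group m_assoc)
  also have "\<dots> = (P \<otimes> k \<otimes> inv P) \<otimes> z \<otimes> inv z" using centerD[OF z X] by simp
  also have "\<dots> = P \<otimes> k \<otimes> inv P" using zc X by (simp add: m_assoc)
  finally show ?thesis .
qed

lemma main_lemma:
  fixes G (structure) and \<psi> :: "'a \<Rightarrow> 'a"
    and \<alpha> :: "(int \<times> ('a \<Rightarrow> 'a)) list"
  assumes "group G"
    and "\<psi> \<in> hom G G"
    and "\<psi> ` commutator_subgroup G \<subseteq> group_center G"
    and "\<alpha> \<in> formal_exprs G"
  shows "\<exists>e. group \<lparr>carrier = carrier G, monoid.mult = circ_op G \<psi> \<alpha>, monoid.one = e\<rparr>"
proof -
  note G = assms(1) and psi = assms(2) and psiZ = assms(3) and al = assms(4)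
  interpret group G by (rule G)
  define Z where "Z = group_center G"
  have Zn: "Z \<lhd> G" unfolding Z_def by (rule center_normal[OF G])
  have Zs: "subgroup Z G" unfolding Z_def by (rule center_subgroup[OF G])
  define Q where "Q = G Mod Z"
  have Q: "group Q" unfolding Q_def by (rule normal.factorgroup_is_group[OF Zn])
  interpret Q: group Q by (rule Q)
  define \<pi> where "\<pi> = (\<lambda>x. Z #> x)"
  have pi: "\<pi> \<in> hom G Q" unfolding \<pi>_def Q_def by (rule normal.r_coset_hom_Mod[OF Zn])
  define F where "F = \<pi> \<circ> \<psi>"
  have F: "F \<in> hom G Q" unfolding F_def using psi pi by (rule Group.hom_compose)
  have psic: "\<And>x. x \<in> carrier G \<Longrightarrow> \<psi> x \<in> carrier G" using psi by (simp add: hom_in_carrier)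
  have psim: "\<And>x y. x \<in> carrier G \<Longrightarrow> y \<in> carrier G \<Longrightarrow> \<psi> (x \<otimes> y) = \<psi> x \<otimes> \<psi> y"
    using psi by (simp add: hom_mult)
  have psiinv: "\<And>x. x \<in> carrier G \<Longrightarrow> \<psi> (inv x) = inv (\<psi> x)"
    using psi G by (simp add: group_hom.hom_inv group_hom_axioms_def group_hom_def)
  have pim: "\<And>x y. x \<in> carrier G \<Longrightarrow> y \<in> carrier G \<Longrightarrow> \<pi> (x \<otimes> y) = \<pi> x \<otimes>\<^bsub>Q\<^esub> \<pi> y"
    using pi by (simp add: hom_mult)
  have Fm: "\<And>x y. x \<in> carrier G \<Longrightarrow> y \<in> carrier G \<Longrightarrow> F (x \<otimes> y) = F x \<otimes>\<^bsub>Q\<^esub> F y"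
    using F by (simp add: hom_mult)
  have Fc: "\<And>x. x \<in> carrier G \<Longrightarrow> F x \<in> carrier Q" using F by (simp add: hom_in_carrier)
  have F1: "F \<one> = \<one>\<^bsub>Q\<^esub>"
    using F G Q by (simp add: group_hom.hom_one group_hom_axioms_def group_hom_def)
  have Fcom: "F x \<otimes>\<^bsub>Q\<^esub> F y = F y \<otimes>\<^bsub>Q\<^esub> F x" if x: "x \<in> carrier G" and y: "y \<in> carrier G" for x y
  proof -
    have "x \<otimes> y \<otimes> inv x \<otimes> inv y \<in> commutator_subgroup G"
      unfolding derived_def by (rule generate.incl) (use x y in blast)
    then have cz: "\<psi> (x \<otimes> y \<otimes> inv x \<otimes> inv y) \<in> Z" using psiZ unfolding Z_def by blast
    have "\<psi> (x \<otimes> y \<otimes> inv x \<otimes> inv y) = \<psi> (x \<otimes> y) \<otimes> inv (\<psi> (y \<otimes> x))"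
      using x y by (simp add: psim psiinv inv_mult_group m_assoc psic)
    then have "\<psi> (x \<otimes> y) \<otimes> inv (\<psi> (y \<otimes> x)) \<in> Z" using cz by simp
    then have "\<pi> (\<psi> (x \<otimes> y)) = \<pi> (\<psi> (y \<otimes> x))"
      unfolding \<pi>_def using cos_eqI[OF G Zs] x y psic by simp
    then have "F (x \<otimes> y) = F (y \<otimes> x)" unfolding F_def by simp
    then show ?thesis using Fm x y by simp
  qed
  define f where "f = (\<lambda>x. \<psi> (expr_apply G \<alpha> x))"
  have fc: "\<And>x. x \<in> carrier G \<Longrightarrow> f x \<in> carrier G"
    unfolding f_def using psic expr_closed[OF G al] by simp
  have f1: "f \<one> = \<one>" unfolding f_def using expr_one[OF G al] psi G
    by (simp add: group_hom.hom_one group_hom_axioms_def group_hom_def)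
  define op where "op = circ_op G \<psi> \<alpha>"
  have op: "\<And>g h. op g h = g \<otimes> f g \<otimes> h \<otimes> inv (f g)"
    unfolding op_def f_def circ_op_def by simp
  have opc: "\<And>g h. g \<in> carrier G \<Longrightarrow> h \<in> carrier G \<Longrightarrow> op g h \<in> carrier G"
    using op fc by simp
  define A where "A = (\<lambda>x. F (expr_apply G \<alpha> x))"
  have Am: "\<And>x y. x \<in> carrier G \<Longrightarrow> y \<in> carrier G \<Longrightarrow> A (x \<otimes> y) = A x \<otimes>\<^bsub>Q\<^esub> A y"
    unfolding A_def by (rule expr_hom[OF G Q F Fcom al])
  have Ac: "\<And>x. x \<in> carrier G \<Longrightarrow> A x \<in> carrier Q" unfolding A_def using Fc expr_closed[OF G al] by simp
  have Acom: "\<And>x y. x \<in> carrier G \<Longrightarrow> y \<in> carrier G \<Longrightarrow> A x \<otimes>\<^bsub>Q\<^esub> A y = A y \<otimes>\<^bsub>Q\<^esub> A x"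
    unfolding A_def using Fcom expr_closed[OF G al] by simp
  have A1: "A \<one> = \<one>\<^bsub>Q\<^esub>" unfolding A_def using expr_one[OF G al] F1 by simp
  have Af: "\<And>x. A x = \<pi> (f x)" unfolding A_def F_def f_def by simp
  have fkey: "\<exists>z\<in>Z. f (op g h) = z \<otimes> (f g \<otimes> f h)" if g: "g \<in> carrier G" and h: "h \<in> carrier G" for g h
  proof -
    define p where "p = f g"
    have p: "p \<in> carrier G" unfolding p_def using fc g by simp
    have e: "op g h = g \<otimes> ((p \<otimes> h) \<otimes> inv p)" unfolding op p_def using g h fc by (simp add: m_assoc)
    have pp: "A p \<otimes>\<^bsub>Q\<^esub> A (inv p) = \<one>\<^bsub>Q\<^esub>" using Am[of p "inv p"] p A1 by simp
    have "A (op g h) = A g \<otimes>\<^bsub>Q\<^esub> ((A p \<otimes>\<^bsub>Q\<^esub> A h) \<otimes>\<^bsub>Q\<^esub> A (inv p))"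
      unfolding e using g h p by (simp add: Am)
    also have "\<dots> = A g \<otimes>\<^bsub>Q\<^esub> (A p \<otimes>\<^bsub>Q\<^esub> (A h \<otimes>\<^bsub>Q\<^esub> A (inv p)))"
      using g h p Ac by (simp add: Q.m_assoc)
    also have "\<dots> = A g \<otimes>\<^bsub>Q\<^esub> (A p \<otimes>\<^bsub>Q\<^esub> (A (inv p) \<otimes>\<^bsub>Q\<^esub> A h))"
      using Acom[of h "inv p"] h p by simp
    also have "\<dots> = A g \<otimes>\<^bsub>Q\<^esub> ((A p \<otimes>\<^bsub>Q\<^esub> A (inv p)) \<otimes>\<^bsub>Q\<^esub> A h)"
      using g h p Ac by (simp add: Q.m_assoc)
    also have "\<dots> = A g \<otimes>\<^bsub>Q\<^esub> A h" using pp h Ac by simp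
    finally have "\<pi> (f (op g h)) = \<pi> (f g \<otimes> f h)" using Af pim fc g h by simp
    then have "f (op g h) \<otimes> inv (f g \<otimes> f h) \<in> Z"
      unfolding \<pi>_def using cos_eqD[OF G Zs] fc opc g h by simp
    then obtain z where z: "z \<in> Z" and ze: "f (op g h) \<otimes> inv (f g \<otimes> f h) = z" by blast
    have "f (op g h) = z \<otimes> (f g \<otimes> f h)"
      using ze fc opc g h z Zs by (metis inv_solve_right m_closed subgroup.mem_carrier)
    then show ?thesis using z by blast
  qed
  have assoc: "op (op g h) k = op g (op h k)" if g: "g \<in> carrier G" and h: "h \<in> carrier G" and k: "k \<in> carrier G" for g h k
  proof -
    obtain z where z: "z \<in> Z" and fz: "f (op g h) = z \<otimes> (f g \<otimes> f h)" using fkey[OF g h] by blast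
    have "op (op g h) k = op g h \<otimes> (z \<otimes> (f g \<otimes> f h) \<otimes> k \<otimes> inv (z \<otimes> (f g \<otimes> f h)))"
      unfolding op[of "op g h"] fz using opc g h k fc z Zs
      by (simp add: m_assoc subgroup.mem_carrier)
    also have "\<dots> = op g h \<otimes> ((f g \<otimes> f h) \<otimes> k \<otimes> inv (f g \<otimes> f h))"
      using conj_central[OF G z[unfolded Z_def]] fc g h k by simp
    also have "\<dots> = op g (op h k)"
      unfolding op using fc g h k by (simp add: m_assoc inv_mult_group cancel1)
    finally show ?thesis .
  qed
  have lone: "\<And>x. x \<in> carrier G \<Longrightarrow> op \<one> x = x" using op f1 by simp
  have rone: "\<And>x. x \<in> carrier G \<Longrightarrow> op x \<one> = x" using op fc by (simp add: m_assoc)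
  have rinv: "\<And>x. x \<in> carrier G \<Longrightarrow> op x (inv (f x) \<otimes> inv x \<otimes> f x) = \<one>"
    using op fc by (simp add: m_assoc cancel2)
  let ?M = "\<lparr>carrier = carrier G, monoid.mult = circ_op G \<psi> \<alpha>, monoid.one = \<one>\<rparr>"
  have "group ?M"
  proof (rule groupI)
    fix x assume x: "x \<in> carrier ?M"
    define r where "r = inv (f x) \<otimes> inv x \<otimes> f x"
    define s where "s = inv (f r) \<otimes> inv r \<otimes> f r"
    have r: "r \<in> carrier G" and s: "s \<in> carrier G" unfolding r_def s_def using x fc by auto
    have xr: "op x r = \<one>" unfolding r_def using rinv x by simp
    have rs: "op r s = \<one>" unfolding s_def using rinv r by simp
    have "x = op x (op r s)" using rs rone x by simp
    also have "\<dots> = s" using assoc[of x r s, symmetric] xr lone x r s by simp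
    finally have "op r x = \<one>" using rs by simp
    then show "\<exists>y\<in>carrier ?M. y \<otimes>\<^bsub>?M\<^esub> x = \<one>\<^bsub>?M\<^esub>" using r unfolding op_def by auto
  qed (use opc assoc lone in \<open>auto simp: op_def\<close>)
  then show ?thesis by blast
qed

theorem proposition3p2:
  fixes G :: "('a, 'b) monoid_scheme" and \<psi> :: "'a \<Rightarrow> 'a"
    and \<alpha> :: "(int \<times> ('a \<Rightarrow> 'a)) list"
  assumes "group G"
    and "\<not> comm_group G"
    and "\<psi> \<in> hom G G"
    and "\<psi> ` commutator_subgroup G \<subseteq> group_center G"
    and "\<alpha> \<in> formal_exprs G"
  shows "\<exists>e. group \<lparr>carrier = carrier G, monoid.mult = circ_op G \<psi> \<alpha>, monoid.one = e\<rparr>"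
  using main_lemma[OF assms(1,3,4,5)] .

end
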